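(* Let $a>0$, $b>-1$, $0<\sigma<\infty$, $1<p<\infty$, and let $V\in MH(p)$. Then there is a constant $C>0$ such that for every $f\in L^p_{\rm loc}(\mathbb H)$ $$\sum_{k=1}^\infty \left( \int_{\Delta_k} |S^k_{a,b}f(z)|^p V(z)\, dm(z) \right)^{\sigma/p} \leq C \sum_{k=1}^\infty \left(\int_{\Delta_k} |f(z)|^p V(z)\, dm(z) \right)^{\sigma/p},$$ where $dm$ is Lebesgue measure on $\mathbb H$.
   Context: $\mathbb H=\{(x,t): x\in\mathbb R^n,\ t>0\}\subset\mathbb R^{n+1}$; points are written $z=(x,t)$, $w=(y,s)$, and $\overline z=(x,-t)$. $\{\Delta_k\}_{k\ge1}$ is a fixed family of closed cubes in $\mathbb H$ with sides parallel to the coordinate axes such that: $\bigcup_k\Delta_k=\mathbb H$ and ${\rm diam}\,\Delta_k\asymp{\rm dist}(\Delta_k,\partial\mathbb H)$; the interiors of the $\Delta_k$ are pairwise disjoint; and the cubes $\Delta_k^\ast$ with the same centers enlarged $5/4$ times satisfy $\sum_k\chi_{\Delta_k^\ast}\le C_n$. For $k\ge1$ and $z=(x,t)\in\mathbb H$, $$S^k_{a,b}f(z)=t^a\int_{\Delta_k}\frac{s^b f(w)\,dw}{|z-\overline w|^{n+1+a+b}}.$$ For $w=(y,s)\in\mathbb H$, $Q_w$ denotes the cube with sides parallel to the axes, centered at $w$, with side length $s$. For $1<p<\infty$ and $1/p+1/q=1$, a positive locally integrable function $V$ on $\mathbb H$ belongs to $MH(p)$ if $$\sup_{w\in\mathbb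 H}\left(\frac{1}{|Q_w|}\int_{Q_w}V(z)\,dz\right)\left(\frac{1}{|Q_w|}\int_{Q_w}V(z)^{-q/p}\,dz\right)^{p/q}<\infty.$$ *)

theory Defs
  imports "HOL-Analysis.Analysis"
begin

type_synonym 'n pt = "(real^'n) \<times> real"

definition Hup :: "'n::finite pt set" where
  "Hup = {z. snd z > 0}"

definition reflect :: "'n::finite pt \<Rightarrow> 'n pt" where
  "reflect z = (fst z, - snd z)"

definition cube :: "'n::finite pt \<Rightarrow> real \<Rightarrow> 'n pt set" where
  "cube c r = cbox (c - r *\<^sub>R One) (c + r *\<^sub>R One)"

definition Qcube :: "'n::finite pt \<Rightarrow> 'n pt set" where
  "Qcube w = cube w (snd w / 2)"

definition whitney_family :: "(nat \<Rightarrow> 'n::finite pt set) \<Rightarrow> bool" where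
  "whitney_family \<Delta> \<longleftrightarrow>
     (\<exists>c r. (\<forall>k. r k > 0 \<and> \<Delta> k = cube (c k) (r k))
        \<and> (\<exists>N::nat. \<forall>z. finite {k. z \<in> cube (c k) (5/4 * r k)}
                         \<and> card {k. z \<in> cube (c k) (5/4 * r k)} \<le> N))
     \<and> (\<Union>k. \<Delta> k) = Hup
     \<and> (\<forall>j k. j \<noteq> k \<longrightarrow> interior (\<Delta> j) \<inter> interior (\<Delta> k) = {})
     \<and> (\<exists>A B. 0 < A \<and> 0 < B \<and>
          (\<forall>k. A * diameter (\<Delta> k) \<le> setdist (\<Delta> k) {z. snd z = 0}
             \<and> setdist (\<Delta> k) {z. snd z = 0} \<le> B * diameter (\<Delta> k)))"

definition S_op :: "real \<Rightarrow> real \<Rightarrow> (nat \<Rightarrow> 'n::finite pt set) \<Rightarrow> nat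
                    \<Rightarrow> ('n pt \<Rightarrow> real) \<Rightarrow> 'n pt \<Rightarrow> real" where
  "S_op a b \<Delta> k f z = snd z powr a *
     (LINT w:\<Delta> k|lborel. snd w powr b * f w
         / norm (z - reflect w) powr (real CARD('n) + 1 + a + b))"

definition MH :: "real \<Rightarrow> ('n::finite pt \<Rightarrow> real) \<Rightarrow> bool" where
  "MH p V \<longleftrightarrow> (let q = p / (p - 1) in
     (\<forall>z\<in>Hup. V z > 0)
     \<and> (\<forall>K. compact K \<and> K \<subseteq> Hup \<longrightarrow> set_integrable lborel K V)
     \<and> (\<forall>w\<in>Hup. set_integrable lborel (Qcube w) (\<lambda>z. V z powr (- q / p)))
     \<and> (\<exists>M. \<forall>w\<in>Hup.
          ((LINT z:Qcube w|lborel. V z) / measure lborel (Qcube w)) *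
          ((LINT z:Qcube w|lborel. V z powr (- q / p)) / measure lborel (Qcube w)) powr (p / q)
          \<le> M))"

definition Lp_loc :: "real \<Rightarrow> ('n::finite pt \<Rightarrow> real) \<Rightarrow> bool" where
  "Lp_loc p f \<longleftrightarrow> (\<forall>K. compact K \<and> K \<subseteq> Hup \<longrightarrow>
      set_integrable lborel K (\<lambda>z. \<bar>f z\<bar> powr p))"

end

theory Submission
  imports Defs "HOL-Library.FuncSet"
begin

lemma young_pt:
  fixes g v al be p q :: real
  assumes p: "1 < p" and q: "q > 1" "1/p + 1/q = 1" and v: "v > 0" and g: "g \<ge> 0" and al: "al > 0" and be: "be > 0"
  shows "al * be * g \<le> al powr p * (g powr p * v) / p + be powr q * v powr (-q/p) / q"
proof -
  have a0: "al * g * v powr (1/p) \<ge> 0" using al g by simp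
  have b0: "be * v powr (-1/p) \<ge> 0" using be by simp
  have e0: "\<And>a b. (al*g*a)*(be*b) = al*be*g*(a*b)" by (simp add: algebra_simps)
  have h: "v powr (1/p) * v powr (-1/p) = 1" using v by (simp add: powr_add[symmetric])
  have e: "al*be*g = (al * g * v powr (1/p)) * (be * v powr (-1/p))"
    using e0[of "v powr (1/p)" "v powr (-1/p)"] h by simp
  have e1: "(al * g * v powr (1/p)) powr p = al powr p * (g powr p * v)"
    using al g v p by (simp add: powr_mult powr_powr)
  have e2: "(be * v powr (-1/p)) powr q = be powr q * v powr (-q/p)"
    using be v by (simp add: powr_mult powr_powr)
  have "al*be*g \<le> (al * g * v powr (1/p)) powr p / p + (be * v powr (-1/p)) powr q / q"
    unfolding e by (rule Youngs_inequality[OF p q(1) q(2) a0 b0])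
  thus ?thesis unfolding e1 e2 .
qed

lemma sint_nonneg:
  fixes f :: "'a \<Rightarrow> real"
  assumes "\<And>x. x \<in> A \<Longrightarrow> 0 \<le> f x"
  shows "0 \<le> (LINT x:A|M. f x)"
  unfolding set_lebesgue_integral_def
  by (rule Bochner_Integration.integral_nonneg) (auto simp: assms indicator_def)

lemma holder_w:
  fixes g V :: "'a \<Rightarrow> real" and p :: real
  assumes p: "1 < p" and PM: "P \<in> sets M"
  and Vpos: "\<And>x. x\<in>P \<Longrightarrow> V x > 0" and gnn: "\<And>x. x\<in>P \<Longrightarrow> g x \<ge> 0"
  and gm: "set_borel_measurable M P g"
  and iX: "set_integrable M P (\<lambda>x. g x powr p * V x)"
  and iY: "set_integrable M P (\<lambda>x. V x powr (-(p/(p-1))/p))"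
  shows "set_integrable M P g \<and> (LINT x:P|M. g x) powr p \<le> (LINT x:P|M. g x powr p * V x) * (LINT x:P|M. V x powr (-(p/(p-1))/p)) powr (p-1)"
proof -
  define q where "q = p/(p-1)"
  have q: "q > 1" "1/p + 1/q = 1" "p/q = p - 1" using p by (auto simp: q_def field_simps)
  define X where "X = (LINT x:P|M. g x powr p * V x)"
  define Y where "Y = (LINT x:P|M. V x powr (-q/p))"
  define I where "I = (LINT x:P|M. g x)"
  have iY': "set_integrable M P (\<lambda>x. V x powr (-q/p))" using iY unfolding q_def by simp
  have yp: "\<And>x al be. x \<in> P \<Longrightarrow> al > 0 \<Longrightarrow> be > 0 \<Longrightarrow> al * be * g x \<le> al powr p * (g x powr p * V x) / p + be powr q * V x powr (-q/p) / q"
    using young_pt[OF p q(1) q(2) Vpos gnn] by blast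
  have ig: "set_integrable M P g"
  proof (rule set_integrable_bound[OF _ gm])
    show "set_integrable M P (\<lambda>x. (g x powr p * V x) / p + V x powr (-q/p) / q)"
      using iX iY' by (intro set_integral_add(1)) auto
    show "AE x in M. x \<in> P \<longrightarrow> norm (g x) \<le> norm ((g x powr p * V x) / p + V x powr (-q/p) / q)"
    proof (intro AE_I2 impI)
      fix x assume x: "x \<in> P"
      have "1 * 1 * g x \<le> 1 powr p * (g x powr p * V x) / p + 1 powr q * V x powr (-q/p) / q"
        using yp[OF x, of 1 1] by simp
      moreover have "0 \<le> (g x powr p * V x) / p + V x powr (-q/p) / q"
        using Vpos[OF x] gnn[OF x] p q by (intro add_nonneg_nonneg divide_nonneg_nonneg) auto
      ultimately show "norm (g x) \<le> norm ((g x powr p * V x) / p + V x powr (-q/p) / q)"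
        using gnn[OF x] by simp
    qed
  qed
  have int_ineq: "al * be * I \<le> al powr p * X / p + be powr q * Y / q" if al: "al > 0" and be: "be > 0" for al be
  proof -
    have i1: "set_integrable M P (\<lambda>x. al powr p / p * (g x powr p * V x))"
      using iX by (rule set_integrable_mult_right)
    have i2: "set_integrable M P (\<lambda>x. be powr q / q * V x powr (-q/p))"
      using iY' by (rule set_integrable_mult_right)
    have "(LINT x:P|M. al * be * g x) \<le> (LINT x:P|M. al powr p / p * (g x powr p * V x) + be powr q / q * V x powr (-q/p))"
    proof (rule set_integral_mono)
      show "set_integrable M P (\<lambda>x. al * be * g x)" using ig by (rule set_integrable_mult_right)
      show "set_integrable M P (\<lambda>x. al powr p / p * (g x powr p * V x) + be powr q / q * V x powr (-q/p))"
        using i1 i2 by (rule set_integral_add(1))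
      fix x assume x: "x \<in> P"
      show "al * be * g x \<le> al powr p / p * (g x powr p * V x) + be powr q / q * V x powr (-q/p)"
        using yp[OF x al be] by simp
    qed
    also have "\<dots> = al powr p / p * X + be powr q / q * Y"
      unfolding X_def Y_def using set_integral_add(2)[OF i1 i2] by simp
    finally show ?thesis unfolding I_def by (simp add: field_simps)
  qed
  have X0: "X \<ge> 0" unfolding X_def using Vpos gnn
    by (intro sint_nonneg) (simp add: less_imp_le)
  have Y0: "Y \<ge> 0" unfolding Y_def
    by (intro sint_nonneg) auto
  have I0: "I \<ge> 0" unfolding I_def using gnn by (intro sint_nonneg) auto
  have main: "I powr p \<le> X * Y powr (p-1)"
  proof (cases "X > 0 \<and> Y > 0")
    case True
    define al where "al = X powr (-1/p)"
    define be where "be = Y powr (-1/q)"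
    have al: "al > 0" and be: "be > 0" using True by (auto simp: al_def be_def)
    have "al powr p * X = 1" using True p by (simp add: al_def powr_powr powr_add[symmetric] flip: powr_add)
    moreover have "be powr q * Y = 1" using True q by (simp add: be_def powr_powr flip: powr_add)
    ultimately have "al * be * I \<le> 1/p + 1/q" using int_ineq[OF al be] by (simp add: mult.assoc)
    hence "al * be * I \<le> 1" using q by simp
    hence "I \<le> 1 / (al * be)" using al be by (simp add: field_simps)
    also have "1 / (al*be) = X powr (1/p) * Y powr (1/q)" using True
      by (simp add: al_def be_def powr_minus_divide divide_simps powr_divide flip: powr_minus)
    finally have "I powr p \<le> (X powr (1/p) * Y powr (1/q)) powr p"
      using I0 p by (intro powr_mono2) auto
    also have "\<dots> = X * Y powr (p/q)" using True p by (simp add: powr_mult powr_powr)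
    finally show ?thesis using q by simp
  next
    case False
    have "I \<le> 0"
    proof (rule ccontr)
      assume "\<not> I \<le> 0" hence Ip: "I > 0" by simp
      show False
      proof (cases "X = 0")
        case True
        define t where "t = (Y/q + 1)/I"
        have t: "t > 0" unfolding t_def using Ip Y0 q by (intro divide_pos_pos add_nonneg_pos divide_nonneg_nonneg) auto
        have "t * 1 * I \<le> t powr p * X / p + 1 powr q * Y / q" by (rule int_ineq[OF t]) simp
        also have "\<dots> = Y/q" using True by simp
        also have "t * 1 * I = Y/q + 1" using Ip by (simp add: t_def)
        finally show False by simp
      next
        case F: False
        hence Yz: "Y = 0" using False X0 Y0 by auto
        define t where "t = (X/p + 1)/I"
        have t: "t > 0" unfolding t_def using Ip X0 p by (intro divide_pos_pos add_nonneg_pos divide_nonneg_nonneg) auto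
        have "1 * t * I \<le> 1 powr p * X / p + t powr q * Y / q" by (rule int_ineq[OF _ t]) simp
        also have "\<dots> = X/p" using Yz by simp
        also have "1 * t * I = X/p + 1" using Ip by (simp add: t_def)
        finally show False by simp
      qed
    qed
    hence "I = 0" using I0 by simp
    thus ?thesis using X0 Y0 p by simp
  qed
  show ?thesis using ig main unfolding X_def Y_def I_def q_def by simp
qed
lemma mem_cube_Basis: "z \<in> cube c r \<longleftrightarrow> (\<forall>i\<in>Basis. \<bar>z \<bullet> i - c \<bullet> i\<bar> \<le> r)"
  by (auto simp: cube_def mem_box inner_diff_left inner_add_left abs_le_iff) 
lemma mem_cube: "z \<in> cube c r \<longleftrightarrow> (\<forall>i. \<bar>fst z $ i - fst c $ i\<bar> \<le> r) \<and> \<bar>snd z - snd c\<bar> \<le> r"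
proof -
  obtain x t where z: "z = (x,t)" by fastforce
  obtain y s where c: "c = (y,s)" by fastforce
  show ?thesis unfolding mem_cube_Basis
    by (auto simp: z c Basis_prod_def inner_Pair inner_diff_left cart_eq_inner_axis Basis_vec_def)
qed
lemma measure_cube: assumes "r \<ge> 0" shows "measure lborel (cube (c::'n::finite pt) r) = (2*r)^(CARD('n)+1)"
proof -
  have "measure lborel (cube c r) = (\<Prod>b\<in>(Basis::'n pt set). 2*r)"
    unfolding cube_def measure_lborel_cbox_eq using assms
    by (auto simp: inner_diff_left inner_add_left algebra_simps)
  also have "\<dots> = (2*r)^(CARD('n)+1)" by simp
  finally show ?thesis .
qed
lemma compact_cube: "compact (cube c r)" by (simp add: cube_def)
lemma cube_sets: "cube c r \<in> sets lborel" by (simp add: cube_def)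
lemma cube_Hup: assumes "r < snd c" shows "cube c r \<subseteq> Hup"
  using assms by (auto simp: mem_cube Hup_def abs_le_iff)
lemma Qcube_Hup: assumes "w \<in> Hup" shows "Qcube w \<subseteq> Hup"
  using assms unfolding Qcube_def by (intro cube_Hup) (auto simp: Hup_def)

lemma diameter_cube: fixes c :: "'n::finite pt" assumes "r \<ge> 0" shows "diameter (cube c r) = 2 * r * norm (One::'n::finite pt)"
proof -
  have "diameter (cube c r) = dist (c - r *\<^sub>R One) (c + r *\<^sub>R (One::'n pt))"
    unfolding cube_def using assms by (intro diameter_cbox) (auto simp: inner_diff_left inner_add_left)
  also have "\<dots> = norm ((c + r *\<^sub>R One) - (c - r *\<^sub>R (One::'n pt)))" by (simp add: dist_norm norm_minus_commute)
  also have "(c + r *\<^sub>R One) - (c - r *\<^sub>R (One::'n pt)) = r *\<^sub>R One + r *\<^sub>R (One::'n pt)" by (simp add: algebra_simps)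
  also have "\<dots> = (r + r) *\<^sub>R (One::'n pt)" by (rule scaleR_add_left[symmetric])
  also have "(r + r) *\<^sub>R (One::'n pt) = (2 * r) *\<^sub>R One" by simp
  also have "norm ((2 * r) *\<^sub>R (One::'n pt)) = 2 * r * norm (One::'n pt)" using assms by simp
  finally show ?thesis .
qed

lemma norm_One_ge: "norm (One::'n::finite pt) \<ge> 1"
proof -
  obtain i :: "'n pt" where i: "i \<in> Basis" using nonempty_Basis by blast
  have "\<bar>One \<bullet> i\<bar> \<le> norm (One::'n pt)" using i by (rule Basis_le_norm)
  thus ?thesis using i by simp
qed

lemma setdist_cube: assumes "r \<ge> 0" "r < snd c"
  shows "setdist (cube c r) {z::'n::finite pt. snd z = 0} = snd c - r"
proof (rule antisym)
  have "(fst c, snd c - r) \<in> cube c r" using assms by (simp add: mem_cube)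
  moreover have "(fst c, 0) \<in> {z::'n pt. snd z = 0}" by simp
  ultimately have "setdist (cube c r) {z::'n pt. snd z = 0} \<le> dist (fst c, snd c - r) (fst c, 0)"
    by (rule setdist_le_dist)
  also have "\<dots> = snd c - r" using assms by (simp add: dist_Pair_Pair)
  finally show "setdist (cube c r) {z::'n pt. snd z = 0} \<le> snd c - r" .
  show "snd c - r \<le> setdist (cube c r) {z::'n pt. snd z = 0}"
  proof (subst le_setdist_iff, intro conjI ballI impI)
    fix x y assume x: "x \<in> cube c r" and y: "y \<in> {z::'n pt. snd z = 0}"
    have "snd c - r \<le> snd x" using x by (auto simp: mem_cube abs_le_iff)
    also have "\<dots> = dist (snd x) (snd y)" using y \<open>snd c - r \<le> snd x\<close> assms by (simp add: dist_real_def)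
    also have "\<dots> \<le> dist x y" by (rule dist_snd_le)
    finally show "snd c - r \<le> dist x y" .
  next
    assume "cube c r = {} \<or> {z::'n pt. snd z = 0} = {}"
    moreover have "c \<in> cube c r" using assms by (simp add: mem_cube)
    moreover have "(fst c, 0) \<in> {z::'n pt. snd z = 0}" by simp
    ultimately show "snd c - r \<le> 0" by blast
  qed
qed

lemma whitney_geom:
  fixes \<Delta> :: "nat \<Rightarrow> 'n::finite pt set"
  assumes "whitney_family \<Delta>"
  obtains c r \<beta> B where "\<And>k. r k > 0" "\<And>k. \<Delta> k = cube (c k) (r k)" "\<beta> > 0" "B > 0"
    "\<And>k. \<beta> * r k \<le> snd (c k) - r k" "\<And>k. snd (c k) - r k \<le> B * r k"
proof -
  have W: "(\<exists>c r. (\<forall>k. r k > 0 \<and> \<Delta> k = cube (c k) (r k))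
        \<and> (\<exists>N::nat. \<forall>z. finite {k. z \<in> cube (c k) (5/4 * r k)}
                         \<and> card {k. z \<in> cube (c k) (5/4 * r k)} \<le> N))
     \<and> (\<Union>k. \<Delta> k) = Hup
     \<and> (\<forall>j k. j \<noteq> k \<longrightarrow> interior (\<Delta> j) \<inter> interior (\<Delta> k) = {})
     \<and> (\<exists>A B. 0 < A \<and> 0 < B \<and>
          (\<forall>k. A * diameter (\<Delta> k) \<le> setdist (\<Delta> k) {z. snd z = 0}
             \<and> setdist (\<Delta> k) {z. snd z = 0} \<le> B * diameter (\<Delta> k)))"
    using assms unfolding whitney_family_def .
  obtain c r where cr: "(\<forall>k. r k > 0 \<and> \<Delta> k = cube (c k) (r k))"
    using conjunct1[OF W] by (elim exE conjE)
  hence r: "\<And>k. r k > 0" and D: "\<And>k. \<Delta> k = cube (c k) (r k)" by auto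
  have U: "(\<Union>k. \<Delta> k) = Hup" using conjunct1[OF conjunct2[OF W]] .
  obtain A B where A: "A > 0" "B > 0"
    and AB': "\<forall>k. A * diameter (\<Delta> k) \<le> setdist (\<Delta> k) {z. snd z = 0}
             \<and> setdist (\<Delta> k) {z. snd z = 0} \<le> B * diameter (\<Delta> k)"
    using conjunct2[OF conjunct2[OF conjunct2[OF W]]] by (elim exE conjE)
  note AB = AB'[rule_format]
  define D0 where "D0 = norm (One::'n pt)"
  have D0: "D0 \<ge> 1" unfolding D0_def by (rule norm_One_ge)
  have lt: "r k < snd (c k)" for k
  proof -
    have "(fst (c k), snd (c k) - r k) \<in> \<Delta> k" using r[of k] by (simp add: D mem_cube)
    hence "(fst (c k), snd (c k) - r k) \<in> Hup" using U by blast
    thus ?thesis by (simp add: Hup_def)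
  qed
  have sd: "setdist (\<Delta> k) {z. snd z = 0} = snd (c k) - r k" for k
    unfolding D using r[of k] lt[of k] by (intro setdist_cube) auto
  have dm: "diameter (\<Delta> k) = 2 * r k * D0" for k
    unfolding D D0_def using r[of k] by (intro diameter_cube) auto
  show ?thesis
  proof (rule that[of r c "2*A*D0" "2*B*D0"])
    show "\<And>k. 0 < r k" by (rule r)
    show "\<And>k. \<Delta> k = cube (c k) (r k)" by (rule D)
    show "0 < 2*A*D0" "0 < 2*B*D0" using A D0 by auto
    fix k
    show "2*A*D0 * r k \<le> snd (c k) - r k" using AB[of k] sd[of k] dm[of k] by (simp add: algebra_simps)
    show "snd (c k) - r k \<le> 2*B*D0 * r k" using AB[of k] sd[of k] dm[of k] by (simp add: algebra_simps)
  qed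
qed

lemma sint_mono_set:
  fixes f :: "'a \<Rightarrow> real"
  assumes "set_integrable M B f" "A \<in> sets M" "A \<subseteq> B" "\<And>x. x \<in> B \<Longrightarrow> 0 \<le> f x"
  shows "(LINT x:A|M. f x) \<le> (LINT x:B|M. f x)"
proof -
  have iA: "set_integrable M A f" using assms(1-3) by (rule set_integrable_subset)
  show ?thesis
    using iA assms(1) unfolding set_integrable_def set_lebesgue_integral_def
    by (intro integral_mono) (use assms(3,4) in \<open>auto simp: indicator_def\<close>)
qed

lemma compact_sets_lborel: "compact (K::'a::euclidean_space set) \<Longrightarrow> K \<in> sets lborel"
  by (simp add: compact_imp_closed)

locale mhw =
  fixes p :: real and V :: "'n::finite pt \<Rightarrow> real" and M :: real
  assumes p1: "1 < p"
  and Vpos: "\<And>z. z \<in> Hup \<Longrightarrow> V z > 0"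
  and Vint: "\<And>K. compact K \<Longrightarrow> K \<subseteq> Hup \<Longrightarrow> set_integrable lborel K V"
  and Sint: "\<And>w. w \<in> Hup \<Longrightarrow> set_integrable lborel (Qcube w) (\<lambda>z. V z powr (-(p/(p-1))/p))"
  and Mb: "\<And>w. w \<in> Hup \<Longrightarrow>
          ((LINT z:Qcube w|lborel. V z) / measure lborel (Qcube w)) *
          ((LINT z:Qcube w|lborel. V z powr (-(p/(p-1))/p)) / measure lborel (Qcube w)) powr (p - 1) \<le> M"
begin

abbreviation sg where "sg z \<equiv> V z powr (-(p/(p-1))/p)"
lemma V_nn: "A \<subseteq> Hup \<Longrightarrow> x \<in> A \<Longrightarrow> 0 \<le> V x"
  by (metis Vpos less_imp_le subsetD)

abbreviation VI where "VI A \<equiv> (LINT z:A|lborel. V z)"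
abbreviation SI where "SI A \<equiv> (LINT z:A|lborel. sg z)"

lemma VI_nonneg: "A \<subseteq> Hup \<Longrightarrow> VI A \<ge> 0"
  by (rule sint_nonneg) (auto dest: Vpos intro: less_imp_le)
lemma SI_nonneg: "SI A \<ge> 0"
  by (rule sint_nonneg) simp

lemma Qcube_compact: "compact (Qcube w)" by (simp add: Qcube_def compact_cube)

lemma measure_Qcube: "w \<in> Hup \<Longrightarrow> measure lborel (Qcube (w::'n pt)) = snd w ^ (CARD('n)+1)"
  unfolding Qcube_def by (subst measure_cube) (auto simp: Hup_def)

lemma Ap_Q:
  assumes w: "w \<in> Hup"
  shows "VI (Qcube w) * SI (Qcube w) powr (p-1) \<le> M * measure lborel (Qcube w) powr p"
proof -
  define m where "m = measure lborel (Qcube w)"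
  have m: "m > 0" using w by (simp add: m_def measure_Qcube Hup_def)
  have V0: "VI (Qcube w) \<ge> 0" using Qcube_Hup[OF w] by (rule VI_nonneg)
  have "(VI (Qcube w) / m) * (SI (Qcube w) / m) powr (p-1) \<le> M" using Mb[OF w] by (simp add: m_def)
  hence "(VI (Qcube w) / m) * (SI (Qcube w) powr (p-1) / m powr (p-1)) \<le> M"
    using m SI_nonneg by (simp add: powr_divide)
  hence "VI (Qcube w) * SI (Qcube w) powr (p-1) \<le> M * (m * m powr (p-1))"
    using m by (simp add: field_simps)
  also have "m * m powr (p-1) = m powr p"
  proof -
    have "m powr p = m powr (1 + (p-1))" by simp
    also have "\<dots> = m * m powr (p-1)" using powr_add[of m 1 "p-1"] m by simp
    finally show ?thesis by simp
  qed
  finally show ?thesis by (simp add: m_def)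
qed

lemma holder_P:
  assumes P: "compact P" "P \<subseteq> Hup" and iS: "set_integrable lborel P sg"
  shows "measure lborel P powr p \<le> VI P * SI P powr (p-1)"
proof -
  have PS: "P \<in> sets lborel" using compact_sets_lborel[OF P(1)] .
  have h: "set_integrable lborel P (\<lambda>_. 1::real) \<and> (LINT x:P|lborel. (1::real)) powr p \<le> (LINT x:P|lborel. 1 powr p * V x) * SI P powr (p-1)"
  proof (rule holder_w[OF p1 PS])
    show "\<And>x. x \<in> P \<Longrightarrow> 0 < V x" using P Vpos by auto
    show "set_borel_measurable lborel P (\<lambda>_. 1::real)" using PS by (simp add: set_borel_measurable_def)
    show "set_integrable lborel P (\<lambda>x. 1 powr p * V x)" using Vint[OF P] by simp
    show "set_integrable lborel P sg" by (rule iS)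
  qed simp
  moreover have "(LINT x:P|lborel. (1::real)) = measure lborel P"
    by (simp add: set_lebesgue_integral_def)
  ultimately show ?thesis by simp
qed

lemma comp:
  assumes w: "w \<in> Hup" and w': "w' \<in> Hup" and P: "compact P" "P \<subseteq> Qcube w" "P \<subseteq> Qcube w'"
    and mP: "measure lborel P > 0"
  shows "VI (Qcube w') \<le> M * (measure lborel (Qcube w') / measure lborel P) powr p * VI (Qcube w)"
    and "SI (Qcube w') powr (p-1) \<le> M * (measure lborel (Qcube w') / measure lborel P) powr p * SI (Qcube w) powr (p-1)"
proof -
  define Q where "Q = Qcube w"
  define Q' where "Q' = Qcube w'"
  define m where "m = measure lborel P"
  define m' where "m' = measure lborel Q'"
  have PH: "P \<subseteq> Hup" using P(2) Qcube_Hup[OF w] by auto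
  have PS: "P \<in> sets lborel" using compact_sets_lborel[OF P(1)] .
  have iSP: "set_integrable lborel P sg" using Sint[OF w] PS P(2) by (rule set_integrable_subset)
  have hP: "m powr p \<le> VI P * SI P powr (p-1)" unfolding m_def by (rule holder_P[OF P(1) PH iSP])
  have AQ: "VI Q' * SI Q' powr (p-1) \<le> M * m' powr p" unfolding Q'_def m'_def by (rule Ap_Q[OF w'])
  have VPQ: "VI P \<le> VI Q" unfolding Q_def
    using Vint[OF Qcube_compact Qcube_Hup[OF w]] PS P(2) Qcube_Hup[OF w] Vpos
    by (intro sint_mono_set V_nn[of "Qcube _"]) auto
  have VPQ': "VI P \<le> VI Q'" unfolding Q'_def
    using Vint[OF Qcube_compact Qcube_Hup[OF w']] PS P(3) Qcube_Hup[OF w'] Vpos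
    by (intro sint_mono_set V_nn[of "Qcube _"]) auto
  have SPQ: "SI P \<le> SI Q" unfolding Q_def
    using Sint[OF w] PS P(2) by (intro sint_mono_set) auto
  have SPQ': "SI P \<le> SI Q'" unfolding Q'_def
    using Sint[OF w'] PS P(3) by (intro sint_mono_set) auto
  have V0: "VI P \<ge> 0" "VI Q' \<ge> 0" "VI Q \<ge> 0"
    using PH Qcube_Hup[OF w'] Qcube_Hup[OF w] by (auto simp: Q'_def Q_def intro!: VI_nonneg)
  have S0: "SI P \<ge> 0" "SI Q' \<ge> 0" "SI Q \<ge> 0" by (rule SI_nonneg)+
  have mp: "m powr p > 0" using mP by (simp add: m_def)
  have pm: "p - 1 > 0" using p1 by simp
  have SPQ'p: "SI P powr (p-1) \<le> SI Q' powr (p-1)" using SPQ' S0 pm by (intro powr_mono2) auto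
  have SPQp: "SI P powr (p-1) \<le> SI Q powr (p-1)" using SPQ S0 pm by (intro powr_mono2) auto
  have ratio: "(m' / m) powr p = m' powr p / m powr p" using mP by (simp add: m_def powr_divide)
  have "VI Q' * m powr p \<le> VI Q' * (VI P * SI P powr (p-1))"
    using hP V0 by (intro mult_left_mono) auto
  also have "\<dots> = VI P * (VI Q' * SI P powr (p-1))" by simp
  also have "\<dots> \<le> VI P * (VI Q' * SI Q' powr (p-1))"
    using V0 SPQ'p by (intro mult_left_mono) auto
  also have "\<dots> \<le> VI P * (M * m' powr p)" using V0 AQ by (intro mult_left_mono) auto
  finally have "VI Q' \<le> VI P * (M * m' powr p) / m powr p" using mp by (simp add: field_simps)
  also have "\<dots> = M * (m'/m) powr p * VI P" by (simp add: ratio)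
  also have "\<dots> \<le> M * (m'/m) powr p * VI Q"
  proof (rule mult_left_mono[OF VPQ])
    have "0 \<le> VI Q' * SI Q' powr (p-1)" using V0 S0 by simp
    hence "0 \<le> M * m' powr p" using AQ by linarith
    hence "M \<ge> 0 \<or> m' powr p = 0" by (auto simp: zero_le_mult_iff)
    thus "0 \<le> M * (m'/m) powr p" using mP by (auto simp: ratio)
  qed
  finally show "VI (Qcube w') \<le> M * (measure lborel (Qcube w') / measure lborel P) powr p * VI (Qcube w)"
    by (simp add: Q_def Q'_def m_def m'_def)
  have "SI Q' powr (p-1) * m powr p \<le> SI Q' powr (p-1) * (VI P * SI P powr (p-1))"
    using hP by (intro mult_left_mono) auto
  also have "\<dots> = SI P powr (p-1) * (VI P * SI Q' powr (p-1))" by simp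
  also have "\<dots> \<le> SI P powr (p-1) * (VI Q' * SI Q' powr (p-1))"
    using VPQ' by (intro mult_left_mono mult_right_mono) auto
  also have "\<dots> \<le> SI P powr (p-1) * (M * m' powr p)" using AQ by (intro mult_left_mono) auto
  finally have "SI Q' powr (p-1) \<le> SI P powr (p-1) * (M * m' powr p) / m powr p" using mp by (simp add: field_simps)
  also have "\<dots> = M * (m'/m) powr p * SI P powr (p-1)" by (simp add: ratio)
  also have "\<dots> \<le> M * (m'/m) powr p * SI Q powr (p-1)"
  proof (rule mult_left_mono[OF SPQp])
    have "0 \<le> VI Q' * SI Q' powr (p-1)" using V0 S0 by simp
    hence "0 \<le> M * m' powr p" using AQ by linarith
    hence "M \<ge> 0 \<or> m' powr p = 0" by (auto simp: zero_le_mult_iff)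
    thus "0 \<le> M * (m'/m) powr p" using mP by (auto simp: ratio)
  qed
  finally show "SI (Qcube w') powr (p-1) \<le> M * (measure lborel (Qcube w') / measure lborel P) powr p * SI (Qcube w) powr (p-1)"
    by (simp add: Q_def Q'_def m_def m'_def)
qed
end

context mhw begin

lemma step:
  fixes y y' :: "real^'n" and s K1 K2 :: real
  assumes K1_def: "K1 = max 1 (M * (2^(CARD('n)+1)) powr p)" and K2_def: "K2 = K1 powr (1/(p-1))"
  assumes s: "s > 0" and yy: "\<And>i. \<bar>y $ i - y' $ i\<bar> \<le> 3* s/4"
  shows "VI (Qcube (y,s)) \<le> K1 * VI (Qcube (y',2* s))"
    and "SI (Qcube (y,s)) \<le> K2 * SI (Qcube (y',2* s))"
proof -
  have K1_ge: "K1 \<ge> 1" by (simp add: K1_def)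
  define P where "P = cube (y, 5* s/4) (s/4)"
  have w: "(y',2* s) \<in> Hup" and w': "(y,s) \<in> Hup" using s by (auto simp: Hup_def)
  have cP: "compact P" by (simp add: P_def compact_cube)
  have P1: "P \<subseteq> Qcube (y',2* s)"
  proof
    fix z assume "z \<in> P"
    hence z0: "\<And>i. \<bar>fst z $ i - y $ i\<bar> \<le> s/4" "\<bar>snd z - 5* s/4\<bar> \<le> s/4" by (auto simp: P_def mem_cube)
    have z: "\<And>i. \<bar>fst z $ i - y $ i\<bar> \<le> s/4" "s \<le> snd z \<and> snd z \<le> 3 * s / 2" using z0 by arith+
    have "\<bar>fst z $ i - y' $ i\<bar> \<le> 2* s/2" for i using z(1)[of i] yy[of i] by linarith
    thus "z \<in> Qcube (y',2* s)" using z(2) s by (auto simp: Qcube_def mem_cube abs_le_iff)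
  qed
  have P2: "P \<subseteq> Qcube (y,s)"
  proof
    fix z assume "z \<in> P"
    hence z0: "\<And>i. \<bar>fst z $ i - y $ i\<bar> \<le> s/4" "\<bar>snd z - 5* s/4\<bar> \<le> s/4" by (auto simp: P_def mem_cube)
    have z: "\<And>i. \<bar>fst z $ i - y $ i\<bar> \<le> s/4" "s \<le> snd z \<and> snd z \<le> 3 * s / 2" using z0 by arith+
    have "\<bar>fst z $ i - y $ i\<bar> \<le> s/2" for i using z(1)[of i] s by linarith
    thus "z \<in> Qcube (y,s)" using z(2) s by (auto simp: Qcube_def mem_cube abs_le_iff)
  qed
  have mP: "measure lborel P = (s/2)^(CARD('n)+1)" unfolding P_def using s by (subst measure_cube) auto
  have mQ: "measure lborel (Qcube (y,s)) = s^(CARD('n)+1)" using w' by (simp add: measure_Qcube)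
  have rat: "measure lborel (Qcube (y,s)) / measure lborel P = 2^(CARD('n)+1)"
    using s by (simp add: mP mQ power_divide)
  have mP0: "measure lborel P > 0" using s by (simp add: mP)
  note c = comp[OF w w' cP P1 P2 mP0]
  have V0: "VI (Qcube (y',2* s)) \<ge> 0" by (rule VI_nonneg[OF Qcube_Hup[OF w]])
  have "M * (2^(CARD('n)+1)) powr p \<le> K1" by (simp add: K1_def)
  from c(1) show "VI (Qcube (y,s)) \<le> K1 * VI (Qcube (y',2* s))"
    unfolding rat using mult_right_mono[OF \<open>M * (2^(CARD('n)+1)) powr p \<le> K1\<close> V0] by linarith
  have S0: "SI (Qcube (y',2* s)) powr (p-1) \<ge> 0" by simp
  have "SI (Qcube (y,s)) powr (p-1) \<le> K1 * SI (Qcube (y',2* s)) powr (p-1)"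
    using c(2) unfolding rat using mult_right_mono[OF \<open>M * (2^(CARD('n)+1)) powr p \<le> K1\<close> S0] by linarith
  hence "(SI (Qcube (y,s)) powr (p-1)) powr (1/(p-1)) \<le> (K1 * SI (Qcube (y',2* s)) powr (p-1)) powr (1/(p-1))"
    using p1 by (intro powr_mono2) auto
  also have "\<dots> = K2 * SI (Qcube (y',2* s))"
    using K1_ge p1 SI_nonneg by (simp add: K2_def powr_mult powr_powr)
  finally show "SI (Qcube (y,s)) \<le> K2 * SI (Qcube (y',2* s))"
    using p1 SI_nonneg by (simp add: powr_powr)
qed

lemma step_ex: "\<exists>K1 K2. K1 \<ge> 1 \<and> K2 \<ge> 1 \<and> (\<forall>(y::real^'n) y' s. s > 0 \<and> (\<forall>i. \<bar>y $ i - y' $ i\<bar> \<le> 3* s/4) \<longrightarrow>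
   VI (Qcube (y,s)) \<le> K1 * VI (Qcube (y',2* s)) \<and> SI (Qcube (y,s)) \<le> K2 * SI (Qcube (y',2* s)))"
proof -
  define K1 where "K1 = max 1 (M * (2^(CARD('n)+1)) powr p)"
  define K2 where "K2 = K1 powr (1/(p-1))"
  have "K1 \<ge> 1" by (simp add: K1_def)
  moreover have "K2 \<ge> 1" using \<open>K1 \<ge> 1\<close> p1 by (simp add: K2_def ge_one_powr_ge_zero)
  ultimately show ?thesis using step[OF K1_def K2_def] by blast
qed

lemma tower:
  fixes y :: "real^'n" and s K1 K2 :: real
  assumes K: "K1 \<ge> 1" "K2 \<ge> 1" and st0: "\<forall>(y::real^'n) y' s. s > 0 \<and> (\<forall>i. \<bar>y $ i - y' $ i\<bar> \<le> 3* s/4) \<longrightarrow>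
   VI (Qcube (y,s)) \<le> K1 * VI (Qcube (y',2* s)) \<and> SI (Qcube (y,s)) \<le> K2 * SI (Qcube (y',2* s))"
  assumes s: "s > 0"
  shows "VI (Qcube (y,s)) \<le> K1^m * VI (Qcube (y,2^m* s)) \<and> SI (Qcube (y,s)) \<le> K2^m * SI (Qcube (y,2^m* s))"
proof (induction m)
  case 0 then show ?case by simp
next
  case (Suc m)
  have sm: "2^m* s > 0" using s by simp
  have st: "VI (Qcube (y,2^m* s)) \<le> K1 * VI (Qcube (y,2*(2^m* s)))" "SI (Qcube (y,2^m* s)) \<le> K2 * SI (Qcube (y,2*(2^m* s)))"
    using st0 sm by auto
  have e: "2 * (2^m * s) = 2^Suc m * s" by simp
  have k1: "K1^m \<ge> 0" "K2^m \<ge> 0" using K by auto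
  have "VI (Qcube (y,s)) \<le> K1^m * (K1 * VI (Qcube (y, 2^Suc m * s)))"
    using Suc.IH mult_left_mono[OF st(1) k1(1)] unfolding e by linarith
  moreover have "SI (Qcube (y,s)) \<le> K2^m * (K2 * SI (Qcube (y, 2^Suc m * s)))"
    using Suc.IH mult_left_mono[OF st(2) k1(2)] unfolding e by linarith
  ultimately show ?case by (simp only: power_Suc2 mult.assoc)
qed

end

lemma interval_cover:
  fixes a t :: real
  assumes a: "a > 0" and t: "a \<le> t" "t \<le> 3*2^J*a"
  shows "\<exists>j\<le>J. 2^j*a \<le> t \<and> t \<le> 3*2^j*a"
  using t
proof (induction J)
  case 0 then show ?case by auto
next
  case (Suc J)
  show ?case
  proof (cases "t \<le> 3*2^J*a")
    case True
    then obtain j where "j \<le> J" "2^j*a \<le> t \<and> t \<le> 3*2^j*a" using Suc by auto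
    thus ?thesis by (intro exI[of _ j]) auto
  next
    case False
    have "2*2^J*a \<le> 3*2^J*a" using a by simp
    moreover have "2^Suc J * a = 2*2^J*a" by simp
    ultimately have "2^Suc J * a \<le> t" using False by linarith
    thus ?thesis using Suc.prems by (intro exI[of _ "Suc J"]) auto
  qed
qed

lemma coord_cover:
  fixes d r s0 :: real and G :: nat
  assumes s0: "s0 > 0" and d: "\<bar>d\<bar> \<le> r" and G: "2*r + s0 \<le> real G * s0"
  shows "\<exists>m\<le>G. \<bar>d - (real m * s0 - r)\<bar> \<le> s0/2"
proof -
  define x where "x = (d + r)/s0 + 1/2"
  have x0: "x \<ge> 0" using d s0 by (simp add: x_def)
  define m where "m = nat \<lfloor>x\<rfloor>"
  have fm: "real m = of_int \<lfloor>x\<rfloor>" using x0 by (simp add: m_def)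
  have f1: "of_int \<lfloor>x\<rfloor> \<le> x" "x < of_int \<lfloor>x\<rfloor> + 1" by linarith+
  have "x \<le> 2*r/s0 + 1/2" using d s0 by (simp add: x_def divide_right_mono)
  also have "2*r/s0 \<le> real G - 1" using G s0 by (simp add: field_simps)
  finally have "real m \<le> real G" using fm f1 by linarith
  hence mG: "m \<le> G" by simp
  have e: "real m * s0 - r - d = s0 * (real m - (x - 1/2))" using s0 by (simp add: x_def field_simps)
  have "\<bar>real m - (x - 1/2)\<bar> \<le> 1/2" using fm f1 by linarith
  hence "\<bar>s0 * (real m - (x - 1/2))\<bar> \<le> s0 * (1/2)" using s0 by (simp add: abs_mult)
  moreover have "d - (real m * s0 - r) = -(s0 * (real m - (x - 1/2)))" using e by linarith
  hence "\<bar>d - (real m * s0 - r)\<bar> = \<bar>s0 * (real m - (x - 1/2))\<bar>" by (simp only: abs_minus_cancel)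
  ultimately have "\<bar>d - (real m * s0 - r)\<bar> \<le> s0/2" by linarith
  thus ?thesis using mG by blast
qed

definition grid :: "real^'n \<Rightarrow> real \<Rightarrow> real \<Rightarrow> nat \<Rightarrow> (real^'n) set" where
  "grid x0 r s0 G = {y. \<forall>i. \<exists>m\<le>G. y $ i = x0 $ i + real m * s0 - r}"

lemma grid_finite_card:
  "finite (grid (x0::real^'n::finite) r s0 G) \<and> card (grid x0 r s0 G) \<le> (G+1)^CARD('n)"
proof -
  define F where "F = (\<lambda>m::'n\<Rightarrow>nat. \<chi> i. x0 $ i + real (m i) * s0 - r)"
  have sub: "grid x0 r s0 G \<subseteq> F ` (PiE UNIV (\<lambda>_. {..G}))"
  proof
    fix y assume "y \<in> grid x0 r s0 G"
    hence "\<forall>i. \<exists>m\<le>G. y $ i = x0 $ i + real m * s0 - r" by (simp add: grid_def)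
    then obtain mf where mf: "\<And>i. mf i \<le> G \<and> y $ i = x0 $ i + real (mf i) * s0 - r" by metis
    have "mf \<in> PiE UNIV (\<lambda>_. {..G})" using mf by auto
    moreover have "y = F mf" using mf by (simp add: F_def vec_eq_iff)
    ultimately show "y \<in> F ` (PiE UNIV (\<lambda>_. {..G}))" by blast
  qed
  have fin: "finite (PiE (UNIV::'n set) (\<lambda>_. {..G}))" by (intro finite_PiE) auto
  have "card (grid x0 r s0 G) \<le> card (F ` (PiE UNIV (\<lambda>_. {..G})))"
    using sub fin by (intro card_mono) auto
  also have "\<dots> \<le> card (PiE (UNIV::'n set) (\<lambda>_. {..G}))" using fin by (rule card_image_le)
  also have "\<dots> = (G+1)^CARD('n)" by (simp add: card_PiE)
  finally show ?thesis using sub fin finite_subset by blast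
qed

lemma cube_cover:
  fixes x0 :: "real^'n::finite" and h r \<beta> B s0 :: real and J G :: nat
  assumes r: "r > 0" and \<beta>: "\<beta> > 0" and lo: "\<beta> * r \<le> h - r" and hi: "h - r \<le> B * r"
    and s0: "s0 = 2*\<beta>*r" and J: "B + 3 \<le> 2^J * \<beta>" and G: "2*r + s0 \<le> real G * s0" and B: "B > 0"
    and z: "z \<in> cube (x0,h) r"
  shows "\<exists>y\<in>grid x0 r s0 G. \<exists>j\<le>J. z \<in> Qcube (y, 2^j * s0)"
proof -
  have zc: "\<And>i. \<bar>fst z $ i - x0 $ i\<bar> \<le> r" "\<bar>snd z - h\<bar> \<le> r" using z by (auto simp: mem_cube)
  have s0p: "s0 > 0" using s0 r \<beta> by simp
  define a where "a = s0/2"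
  have a: "a > 0" using s0p by (simp add: a_def)
  have t1: "a \<le> snd z" using zc(2) lo s0 by (simp add: a_def abs_le_iff)
  have "snd z \<le> (B + 2) * r" using zc(2) hi by (simp add: abs_le_iff algebra_simps)
  also have "\<dots> \<le> 3 * (2^J * \<beta>) * r" using J r B by (intro mult_right_mono) auto
  also have "\<dots> = 3*2^J*a" using s0 by (simp add: a_def)
  finally obtain j where j: "j \<le> J" "2^j*a \<le> snd z" "snd z \<le> 3*2^j*a"
    using interval_cover[OF a t1] by blast
  have "\<forall>i. \<exists>m\<le>G. \<bar>fst z $ i - x0 $ i - (real m * s0 - r)\<bar> \<le> s0/2"
    using coord_cover[OF s0p zc(1) G] by blast
  then obtain mf where mf: "\<And>i. mf i \<le> G \<and> \<bar>fst z $ i - x0 $ i - (real (mf i) * s0 - r)\<bar> \<le> s0/2" by metis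
  define y where "y = (\<chi> i. x0 $ i + real (mf i) * s0 - r)"
  have yg: "y \<in> grid x0 r s0 G" using mf by (auto simp: grid_def y_def)
  have "s0/2 \<le> 2^j * s0 / 2" using s0p by simp
  hence "\<bar>fst z $ i - y $ i\<bar> \<le> 2^j * s0 / 2" for i using mf[of i] by (simp add: y_def algebra_simps)
  moreover have "\<bar>snd z - 2^j * s0\<bar> \<le> 2^j * s0 / 2" using j(2,3) unfolding a_def by arith
  ultimately have "z \<in> Qcube (y, 2^j * s0)" by (simp add: Qcube_def mem_cube)
  thus ?thesis using yg j(1) by blast
qed

lemma grid_top:
  fixes x0 :: "real^'n::finite" and r \<beta> B s0 :: real and J G :: nat
  assumes r: "r > 0" and \<beta>: "\<beta> > 0" and B: "B > 0"
    and s0: "s0 = 2*\<beta>*r" and J: "B + 3 + 4*\<beta> \<le> 2^J * \<beta>" and G: "real G * s0 \<le> 2*r + 2* s0"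
    and y: "y \<in> grid x0 r s0 G"
  shows "\<bar>y $ i - x0 $ i\<bar> \<le> 3 * (2^J * s0) / 4"
proof -
  obtain m where m: "m \<le> G" "y $ i = x0 $ i + real m * s0 - r" using y by (auto simp: grid_def)
  have s0p: "s0 > 0" using s0 r \<beta> by simp
  have "real m * s0 \<le> real G * s0" using m(1) s0p by (intro mult_right_mono) auto
  moreover have 1: "y $ i - x0 $ i = real m * s0 - r" using m(2) by simp
  moreover have 2: "0 \<le> real m * s0" using s0p by simp
  ultimately have "\<bar>y $ i - x0 $ i\<bar> \<le> r + 2 * s0" unfolding abs_le_iff using G r s0p by linarith
  also have "\<dots> = (1 + 4*\<beta>) * r" using s0 by (simp add: algebra_simps)
  also have "\<dots> \<le> (3/2) * (2^J * \<beta>) * r" using J r \<beta> B by (intro mult_right_mono) auto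
  also have "\<dots> = 3 * (2^J * s0) / 4" using s0 by (simp add: algebra_simps)
  finally show ?thesis .
qed

lemma kernel_bound:
  fixes c z w :: "'n::finite pt" and r \<beta> a b :: real
  assumes r: "r > 0" and \<beta>: "\<beta> > 0" and lo: "\<beta> * r \<le> snd c - r" and a: "a > 0" and b: "b > -1"
    and z: "z \<in> cube c r" and w: "w \<in> cube c r"
  defines "N \<equiv> real CARD('n) + 1"
  shows "snd z powr a * (snd w powr b / norm (z - reflect w) powr (N + a + b))
          \<le> (max 1 ((\<beta>/(2*\<beta>+2)) powr b) * (2*\<beta>) powr (-N)) * r powr (-N)"
proof -
  define t where "t = snd z"
  define s where "s = snd w"
  define u where "u = snd c - r"
  define \<tau> where "\<tau> = t + s"
  have br: "\<beta> * r > 0" using r \<beta> by simp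
  have u: "u \<ge> \<beta> * r" "u > 0" using lo br by (auto simp: u_def)
  have ts: "u \<le> t" "t \<le> u + 2*r" "u \<le> s" "s \<le> u + 2*r"
    using z w by (auto simp: mem_cube abs_le_iff t_def s_def u_def)
  have tp: "t > 0" "s > 0" using ts u by auto
  have \<tau>: "\<tau> > 0" "\<tau> \<ge> 2*u" using tp ts by (auto simp: \<tau>_def)
  have N: "N \<ge> 2" by (simp add: N_def)
  have E: "N + a + b > 0" using N a b by simp
  have nrm: "\<tau> \<le> norm (z - reflect w)"
  proof -
    have "snd (z - reflect w) = \<tau>" by (simp add: reflect_def \<tau>_def t_def s_def)
    moreover have "norm (snd (z - reflect w)) \<le> norm (z - reflect w)"
      using norm_snd_le[where x="fst (z - reflect w)" and y="snd (z - reflect w)"] by (simp only: prod.collapse)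
    ultimately show ?thesis using \<tau> by simp
  qed
  have "s powr b / norm (z - reflect w) powr (N + a + b) \<le> s powr b / \<tau> powr (N + a + b)"
    using nrm \<tau> E by (intro divide_left_mono powr_mono2 mult_pos_pos) auto
  hence "t powr a * (s powr b / norm (z - reflect w) powr (N + a + b)) \<le> t powr a * (s powr b / \<tau> powr (N + a + b))"
    by (intro mult_left_mono) auto
  also have "t powr a * (s powr b / \<tau> powr (N + a + b)) = (t/\<tau>) powr a * ((s/\<tau>) powr b * \<tau> powr (-N))"
    using tp \<tau> by (simp add: powr_divide powr_add powr_minus field_simps)
  also have "\<dots> \<le> 1 * (max 1 ((\<beta>/(2*\<beta>+2)) powr b) * ((2*\<beta>) powr (-N) * r powr (-N)))"
  proof (intro mult_mono)
    show "(t/\<tau>) powr a \<le> 1" using tp \<tau> a by (intro powr_le1) (auto simp: \<tau>_def)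
    show "(s/\<tau>) powr b \<le> max 1 ((\<beta>/(2*\<beta>+2)) powr b)"
    proof (cases "b \<ge> 0")
      case True
      hence "(s/\<tau>) powr b \<le> 1" using tp \<tau> by (intro powr_le1) (auto simp: \<tau>_def)
      thus ?thesis by simp
    next
      case False
      have "\<beta> * (t + s) \<le> s * (2*\<beta>+2)"
      proof -
        have "\<beta> * t \<le> \<beta> * (u + 2*r)" using ts(2) \<beta> by (intro mult_left_mono) auto
        hence "\<beta> * t \<le> \<beta> * u + 2 * (\<beta> * r)" by (simp add: algebra_simps)
        moreover have "\<beta> * u \<le> \<beta> * s" using ts \<beta> by (intro mult_left_mono) auto
        ultimately show ?thesis using ts u by (simp add: algebra_simps)
      qed
      hence "\<beta>/(2*\<beta>+2) \<le> s/\<tau>" using \<beta> \<tau> by (simp add: field_simps \<tau>_def)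
      hence "(s/\<tau>) powr b \<le> (\<beta>/(2*\<beta>+2)) powr b" using False \<beta> by (intro powr_mono2') auto
      thus ?thesis by simp
    qed
    have "\<tau> powr (-N) \<le> (2*\<beta>*r) powr (-N)" using \<tau> u \<beta> r N by (intro powr_mono2') auto
    thus "\<tau> powr (-N) \<le> (2*\<beta>) powr (-N) * r powr (-N)" using \<beta> r by (simp add: powr_mult)
  qed auto
  finally show ?thesis by (simp add: t_def s_def mult.assoc)
qed

lemma sint_cover:
  fixes f :: "'a::euclidean_space \<Rightarrow> real" and B :: "'i \<Rightarrow> 'a set"
  assumes I: "finite I" and A: "A \<in> sets lborel" and Bm: "\<And>i. i\<in>I \<Longrightarrow> B i \<in> sets lborel"
    and sub: "A \<subseteq> (\<Union>i\<in>I. B i)" and iB: "\<And>i. i\<in>I \<Longrightarrow> set_integrable lborel (B i) f"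
    and nn: "\<And>x. x \<in> (\<Union>i\<in>I. B i) \<Longrightarrow> 0 \<le> f x"
  shows "set_integrable lborel A f \<and> (LINT x:A|lborel. f x) \<le> (\<Sum>i\<in>I. LINT x:B i|lborel. f x)"
proof -
  have iU: "set_integrable lborel (\<Union>i\<in>I. B i) f" using I iB Bm by (rule set_integrable_UN)
  have iA: "set_integrable lborel A f" using iU A sub by (rule set_integrable_subset)
  have "(LINT x:A|lborel. f x) \<le> (LINT x:(\<Union>i\<in>I. B i)|lborel. f x)"
    using iU A sub nn by (rule sint_mono_set)
  also have "\<dots> \<le> (\<Sum>i\<in>I. LINT x:B i|lborel. f x)"
  proof -
    have "(LINT x:(\<Union>i\<in>I. B i)|lborel. f x) \<le> integral\<^sup>L lborel (\<lambda>x. \<Sum>i\<in>I. indicator (B i) x *\<^sub>R f x)"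
      unfolding set_lebesgue_integral_def
    proof (rule integral_mono)
      show "integrable lborel (\<lambda>x. indicator (\<Union>i\<in>I. B i) x *\<^sub>R f x)" using iU by (simp add: set_integrable_def)
      show "integrable lborel (\<lambda>x. \<Sum>i\<in>I. indicator (B i) x *\<^sub>R f x)"
        by (rule Bochner_Integration.integrable_sum) (use iB in \<open>auto simp: set_integrable_def\<close>)
      fix x
      show "indicator (\<Union>i\<in>I. B i) x *\<^sub>R f x \<le> (\<Sum>i\<in>I. indicator (B i) x *\<^sub>R f x)"
      proof (cases "x \<in> (\<Union>i\<in>I. B i)")
        case True
        then obtain i0 where i0: "i0 \<in> I" "x \<in> B i0" by blast
        have "indicator (B i0) x *\<^sub>R f x \<le> (\<Sum>i\<in>I. indicator (B i) x *\<^sub>R f x)"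
          using I i0(1) nn[OF True] by (intro member_le_sum) (auto simp: indicator_def)
        thus ?thesis using True i0 by (simp add: indicator_def)
      next
        case False
        hence "\<And>i. i \<in> I \<Longrightarrow> x \<notin> B i" by blast
        thus ?thesis using False by (simp add: indicator_def)
      qed
    qed
    also have "\<dots> = (\<Sum>i\<in>I. LINT x:B i|lborel. f x)"
      unfolding set_lebesgue_integral_def by (rule Bochner_Integration.integral_sum) (use iB in \<open>auto simp: set_integrable_def\<close>)
    finally show ?thesis .
  qed
  finally show ?thesis using iA by blast
qed

context mhw begin

lemma Ap_cube:
  fixes \<beta> B :: real
  assumes \<beta>: "\<beta> > 0" and B: "B > 0"
  shows "\<exists>CA>0. \<forall>(c::'n pt) r. r > 0 \<and> \<beta> * r \<le> snd c - r \<and> snd c - r \<le> B * r \<longrightarrow>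
     set_integrable lborel (cube c r) sg \<and>
     VI (cube c r) * SI (cube c r) powr (p-1) \<le> CA * r powr ((real CARD('n) + 1) * p)"
proof -
  obtain K1 K2 where K: "K1 \<ge> 1" "K2 \<ge> 1" and st: "\<forall>(y::real^'n) y' s. s > 0 \<and> (\<forall>i. \<bar>y $ i - y' $ i\<bar> \<le> 3 * s / 4) \<longrightarrow>
   VI (Qcube (y,s)) \<le> K1 * VI (Qcube (y',2 * s)) \<and> SI (Qcube (y,s)) \<le> K2 * SI (Qcube (y',2 * s))"
    using step_ex by blast
  obtain J :: nat where J0: "(B + 3 + 4*\<beta>)/\<beta> < 2^J" using real_arch_pow[of 2 "(B + 3 + 4*\<beta>)/\<beta>"] by auto
  have J: "B + 3 + 4*\<beta> \<le> 2^J * \<beta>" using J0 \<beta> by (simp add: field_simps)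
  define G where "G = nat \<lceil>1/\<beta>\<rceil> + 1"
  have Gr: "real G = of_int \<lceil>1/\<beta>\<rceil> + 1" using \<beta> by (simp add: G_def)
  have cl: "1/\<beta> \<le> of_int \<lceil>1/\<beta>\<rceil>" "of_int \<lceil>1/\<beta>\<rceil> < 1/\<beta> + 1" by linarith+
  define m0 where "m0 = real ((G+1)^CARD('n) * (J+1))"
  have "(G+1)^CARD('n) * (J+1) > 0" by simp
  hence m0: "m0 > 0" unfolding m0_def by (simp only: of_nat_0_less_iff)
  define N where "N = real CARD('n) + 1"
  define CA where "CA = (m0 * K1^(J+1)) * (m0 * K2^(J+1)) powr (p-1) * max 1 M * (2^(J+2)*\<beta>) powr (N*p)"
  have CA: "CA > 0" using m0 K \<beta> by (simp add: CA_def)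
  show ?thesis
  proof (intro exI[of _ CA] conjI[OF CA] allI impI)
    fix c :: "'n pt" and r :: real
    assume cr: "r > 0 \<and> \<beta> * r \<le> snd c - r \<and> snd c - r \<le> B * r"
    obtain x0 h where c: "c = (x0, h)" by fastforce
    have r: "r > 0" and lo: "\<beta> * r \<le> h - r" and hi: "h - r \<le> B * r" using cr by (auto simp: c)
    define s0 where "s0 = 2*\<beta>*r"
    have s0p: "s0 > 0" using \<beta> r by (simp add: s0_def)
    have G1: "2*r + s0 \<le> real G * s0"
    proof -
      have "2*r + s0 = (1/\<beta> + 1) * s0" using \<beta> by (simp add: s0_def field_simps)
      also have "\<dots> \<le> real G * s0" using Gr cl s0p by (intro mult_right_mono) auto
      finally show ?thesis .
    qed
    have G2: "real G * s0 \<le> 2*r + 2* s0"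
    proof -
      have "real G * s0 \<le> (1/\<beta> + 2) * s0" using Gr cl s0p by (intro mult_right_mono) auto
      also have "\<dots> = 2*r + 2* s0" using \<beta> by (simp add: s0_def field_simps)
      finally show ?thesis .
    qed
    define Y where "Y = grid x0 r s0 G"
    have Yfc: "finite Y" "card Y \<le> (G+1)^CARD('n)" using grid_finite_card[of x0 r s0 G] by (auto simp: Y_def)
    define I where "I = Y \<times> {..J}"
    define QB where "QB = (\<lambda>(y::real^'n,j::nat). Qcube (y, 2^j * s0))"
    have I: "finite I" using Yfc by (simp add: I_def)
    have cardI: "real (card I) \<le> m0"
    proof -
      have "card I = card Y * (J+1)" by (simp add: I_def card_cartesian_product)
      also have "\<dots> \<le> (G+1)^CARD('n) * (J+1)" using Yfc by (intro mult_right_mono) auto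
      finally show ?thesis by (simp add: m0_def del: of_nat_mult of_nat_power)
    qed
    have QBH: "\<And>i. i \<in> I \<Longrightarrow> QB i \<subseteq> Hup"
    proof -
      fix i :: "(real^'n) \<times> nat" obtain y j where "i = (y,j)" by fastforce
      thus "QB i \<subseteq> Hup" using Qcube_Hup[of "(y, 2^j* s0)"] s0p by (simp add: QB_def Hup_def)
    qed
    have QBin: "\<And>i. i \<in> I \<Longrightarrow> (case i of (y,j) \<Rightarrow> (y, 2^j* s0)) \<in> Hup"
      using s0p by (auto simp: Hup_def split: prod.splits)
    have QBm: "\<And>i. QB i \<in> sets lborel"
    proof -
      fix i :: "(real^'n) \<times> nat" obtain y j where "i = (y,j)" by fastforce
      thus "QB i \<in> sets lborel" unfolding QB_def Qcube_def by (simp only: prod.case) (rule cube_sets)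
    qed
    have J3: "B + 3 \<le> 2^J * \<beta>" using J \<beta> by linarith
    have cov: "cube c r \<subseteq> (\<Union>i\<in>I. QB i)"
    proof
      fix z assume z: "z \<in> cube c r"
      obtain y j where "y \<in> Y" "j \<le> J" "z \<in> Qcube (y, 2^j * s0)"
        using cube_cover[OF r \<beta> lo hi s0_def J3 G1 B z[unfolded c]] unfolding Y_def by blast
      thus "z \<in> (\<Union>i\<in>I. QB i)" by (auto simp: I_def QB_def)
    qed
    define T where "T = Qcube (x0, 2 * (2^J * s0))"
    have Tin: "(x0, 2 * (2^J * s0)) \<in> Hup" using s0p by (simp add: Hup_def)
    have VT0: "VI T \<ge> 0" unfolding T_def by (rule VI_nonneg[OF Qcube_Hup[OF Tin]])
    have ST0: "SI T \<ge> 0" by (rule SI_nonneg)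
    have bnd: "VI (QB i) \<le> K1^(J+1) * VI T \<and> SI (QB i) \<le> K2^(J+1) * SI T" if i: "i \<in> I" for i
    proof -
      obtain y j where ij: "i = (y,j)" "y \<in> Y" "j \<le> J" using i by (auto simp: I_def)
      have sj: "2^j * s0 > 0" using s0p by simp
      have tw: "VI (Qcube (y,2^j* s0)) \<le> K1^(J-j) * VI (Qcube (y,2^(J-j)*(2^j* s0))) \<and> SI (Qcube (y,2^j* s0)) \<le> K2^(J-j) * SI (Qcube (y,2^(J-j)*(2^j* s0)))"
        by (rule tower[OF K st sj])
      have e: "2^(J-j)*(2^j* s0) = 2^J * s0" using ij(3) by (simp add: mult.assoc[symmetric] power_add[symmetric])
      have gt: "\<bar>y $ i - x0 $ i\<bar> \<le> 3 * (2^J * s0) / 4" for i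
        using grid_top[OF r \<beta> B s0_def J G2] ij(2) unfolding Y_def by blast
      have sJ: "2^J * s0 > 0" using s0p by simp
      have st2: "VI (Qcube (y,2^J* s0)) \<le> K1 * VI T \<and> SI (Qcube (y,2^J* s0)) \<le> K2 * SI T"
        using st sJ gt unfolding T_def by blast
      have p1': "K1^(J-j) * K1 \<le> K1^(J+1)" "K2^(J-j) * K2 \<le> K2^(J+1)"
        using K ij(3) by (simp_all add: power_Suc2[symmetric] power_increasing)
      have "VI (QB i) \<le> K1^(J-j) * (K1 * VI T)"
        using tw st2 K unfolding ij(1) QB_def e by (auto intro: order.trans mult_left_mono)
      also have "\<dots> \<le> K1^(J+1) * VI T" using p1' VT0 by (simp add: mult.assoc[symmetric] mult_right_mono)
      finally have 1: "VI (QB i) \<le> K1^(J+1) * VI T" .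
      have "SI (QB i) \<le> K2^(J-j) * (K2 * SI T)"
        using tw st2 K unfolding ij(1) QB_def e by (auto intro: order.trans mult_left_mono)
      also have "\<dots> \<le> K2^(J+1) * SI T" using p1' ST0 by (simp add: mult.assoc[symmetric] mult_right_mono)
      finally show ?thesis using 1 by blast
    qed
    have cm: "cube c r \<in> sets lborel" by (rule cube_sets)
    have CV: "set_integrable lborel (cube c r) V \<and> VI (cube c r) \<le> (\<Sum>i\<in>I. VI (QB i))"
    proof (rule sint_cover[OF I cm QBm cov])
      fix i assume "i \<in> I"
      thus "set_integrable lborel (QB i) V" using QBH[of i] by (intro Vint) (auto simp: QB_def Qcube_def compact_cube split: prod.splits)
    next
      fix x assume "x \<in> (\<Union>i\<in>I. QB i)"
      thus "0 \<le> V x" using QBH by (auto intro: V_nn)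
    qed
    have CS: "set_integrable lborel (cube c r) sg \<and> SI (cube c r) \<le> (\<Sum>i\<in>I. SI (QB i))"
    proof (rule sint_cover[OF I cm QBm cov])
      fix i assume "i \<in> I"
      obtain y j where yj: "i = (y,j)" by fastforce
      have "(y, 2^j* s0) \<in> Hup" using s0p by (simp add: Hup_def)
      thus "set_integrable lborel (QB i) sg" unfolding yj QB_def by (simp only: prod.case) (rule Sint)
    qed simp
    have VD: "VI (cube c r) \<le> m0 * K1^(J+1) * VI T"
    proof -
      have "(\<Sum>i\<in>I. VI (QB i)) \<le> (\<Sum>i\<in>I. K1^(J+1) * VI T)" using bnd by (intro sum_mono) auto
      also have "\<dots> = real (card I) * (K1^(J+1) * VI T)" by simp
      also have "\<dots> \<le> m0 * (K1^(J+1) * VI T)" using cardI K VT0 by (intro mult_right_mono) auto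
      finally show ?thesis using CV by (simp add: mult.assoc)
    qed
    have SD: "SI (cube c r) \<le> m0 * K2^(J+1) * SI T"
    proof -
      have "(\<Sum>i\<in>I. SI (QB i)) \<le> (\<Sum>i\<in>I. K2^(J+1) * SI T)" using bnd by (intro sum_mono) auto
      also have "\<dots> = real (card I) * (K2^(J+1) * SI T)" by simp
      also have "\<dots> \<le> m0 * (K2^(J+1) * SI T)" using cardI K ST0 by (intro mult_right_mono) auto
      finally show ?thesis using CS by (simp add: mult.assoc)
    qed
    have "r < h" using lo r \<beta> by (smt (verit) mult_pos_pos)
    hence "cube c r \<subseteq> Hup" unfolding c by (intro cube_Hup) simp
    hence VD0: "VI (cube c r) \<ge> 0" by (rule VI_nonneg)
    have pm: "p - 1 > 0" using p1 by simp
    have AT: "VI T * SI T powr (p-1) \<le> M * measure lborel T powr p" unfolding T_def by (rule Ap_Q[OF Tin])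
    have mT: "measure lborel T = (2^(J+2)*\<beta>*r) ^ (CARD('n)+1)"
    proof -
      have "measure lborel T = (2 * (2^J * s0))^(CARD('n)+1)" unfolding T_def using measure_Qcube[OF Tin] by simp
      also have "2 * (2^J * s0) = 2^(J+2)*\<beta>*r" by (simp add: s0_def power_add algebra_simps)
      finally show ?thesis .
    qed
    have mTp: "measure lborel T powr p = (2^(J+2)*\<beta>) powr (N*p) * r powr (N*p)"
    proof -
      have X: "2^(J+2)*\<beta>*r > 0" using \<beta> r by simp
      have "(2^(J+2)*\<beta>*r) ^ (CARD('n)+1) = (2^(J+2)*\<beta>*r) powr (real (CARD('n)+1))"
        using powr_realpow[OF X, of "CARD('n)+1"] by simp
      hence "measure lborel T powr p = ((2^(J+2)*\<beta>*r) powr N) powr p"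
        unfolding mT N_def by (simp add: add.commute)
      also have "\<dots> = (2^(J+2)*\<beta>) powr (N*p) * r powr (N*p)" using \<beta> r by (simp add: powr_powr powr_mult)
      finally show ?thesis .
    qed
    have "VI (cube c r) * SI (cube c r) powr (p-1) \<le> (m0 * K1^(J+1) * VI T) * (m0 * K2^(J+1) * SI T) powr (p-1)"
      using VD SD VD0 SI_nonneg[of "cube c r"] pm by (intro mult_mono powr_mono2) auto
    also have "\<dots> = (m0 * K1^(J+1)) * (m0 * K2^(J+1)) powr (p-1) * (VI T * SI T powr (p-1))"
      using m0 K ST0 by (simp add: powr_mult)
    also have "\<dots> \<le> (m0 * K1^(J+1)) * (m0 * K2^(J+1)) powr (p-1) * (max 1 M * measure lborel T powr p)"
      using AT m0 K by (intro mult_left_mono) (auto intro: order.trans mult_right_mono)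
    also have "\<dots> = CA * r powr ((real CARD('n) + 1) * p)" by (simp add: CA_def mTp N_def)
    finally show "set_integrable lborel (cube c r) sg \<and> VI (cube c r) * SI (cube c r) powr (p-1) \<le> CA * r powr ((real CARD('n) + 1) * p)"
      using CS by blast
  qed
qed
end

lemma kern_meas:
  "(\<lambda>x::'n::finite pt \<times> 'n pt. snd (snd x) powr b / norm (fst x - reflect (snd x)) powr E) \<in> borel_measurable (lborel \<Otimes>\<^sub>M lborel)"
proof -
  have c1: "(\<lambda>x::'n pt \<times> 'n pt. norm (fst x - reflect (snd x))) \<in> borel_measurable borel"
    unfolding reflect_def by (intro borel_measurable_continuous_onI continuous_intros)
  have c2: "(\<lambda>x::'n pt \<times> 'n pt. snd (snd x)) \<in> borel_measurable borel"
    by (intro borel_measurable_continuous_onI continuous_intros)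
  have "(\<lambda>x::'n pt \<times> 'n pt. snd (snd x) powr b / norm (fst x - reflect (snd x)) powr E) \<in> borel_measurable borel"
    using c1 c2 by (intro borel_measurable_divide powr_real_measurable) auto
  thus ?thesis by (simp add: lborel_prod)
qed

lemma Sf_meas:
  fixes D :: "'n::finite pt set" and f :: "'n pt \<Rightarrow> real"
  assumes fm: "(\<lambda>w. indicator D w *\<^sub>R f w) \<in> borel_measurable lborel"
  shows "(\<lambda>z. snd z powr a * (LINT w:D|lborel. snd w powr b * f w / norm (z - reflect w) powr E)) \<in> borel_measurable lborel"
proof -
  have fm2: "(\<lambda>x::'n pt \<times> 'n pt. indicator D (snd x) *\<^sub>R f (snd x)) \<in> borel_measurable (lborel \<Otimes>\<^sub>M lborel)"
    using measurable_compose[OF measurable_snd fm] by simp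
  have "case_prod (\<lambda>z w. indicator D w *\<^sub>R (snd w powr b * f w / norm (z - reflect w) powr E)) =
        (\<lambda>x. (snd (snd x) powr b / norm (fst x - reflect (snd x)) powr E) * (indicator D (snd x) *\<^sub>R f (snd x)))"
    by (auto simp: fun_eq_iff indicator_def)
  also have "\<dots> \<in> borel_measurable (lborel \<Otimes>\<^sub>M lborel)"
    using kern_meas fm2 by (rule borel_measurable_times)
  finally have "(\<lambda>z. integral\<^sup>L lborel (\<lambda>w. indicator D w *\<^sub>R (snd w powr b * f w / norm (z - reflect w) powr E))) \<in> borel_measurable lborel"
    by (rule lborel.borel_measurable_lebesgue_integral)
  hence "(\<lambda>z. LINT w:D|lborel. snd w powr b * f w / norm (z - reflect w) powr E) \<in> borel_measurable lborel"
    by (simp add: set_lebesgue_integral_def)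
  moreover have "(\<lambda>z::'n pt. snd z powr a) \<in> borel_measurable lborel"
  proof -
    have "(\<lambda>z::'n pt. snd z) \<in> borel_measurable borel" by (intro borel_measurable_continuous_onI continuous_intros)
    hence "(\<lambda>z::'n pt. snd z powr a) \<in> borel_measurable borel" by (intro powr_real_measurable) auto
    thus ?thesis by simp
  qed
  ultimately show ?thesis by (intro borel_measurable_times)
qed

lemma kz_meas:
  fixes z :: "'n::finite pt"
  shows "(\<lambda>w::'n pt. snd w powr b / norm (z - reflect w) powr E) \<in> borel_measurable lborel"
proof -
  have c1: "(\<lambda>w::'n pt. norm (z - reflect w)) \<in> borel_measurable borel"
    unfolding reflect_def by (intro borel_measurable_continuous_onI continuous_intros)
  have c2: "(\<lambda>w::'n pt. snd w) \<in> borel_measurable borel"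
    by (intro borel_measurable_continuous_onI continuous_intros)
  have "(\<lambda>w::'n pt. snd w powr b / norm (z - reflect w) powr E) \<in> borel_measurable borel"
    using c1 c2 by (intro borel_measurable_divide powr_real_measurable) auto
  thus ?thesis by simp
qed

context mhw begin

lemma per_cube:
  fixes c :: "'n pt" and r \<beta> a b CA :: real and f :: "'n pt \<Rightarrow> real" and \<Delta> :: "nat \<Rightarrow> 'n pt set"
  assumes Dk: "\<Delta> k = cube c r"
    and r: "r > 0" and \<beta>: "\<beta> > 0" and lo: "\<beta> * r \<le> snd c - r" and a: "a > 0" and b: "b > -1"
    and CAp: "CA > 0"
    and CAb: "set_integrable lborel (cube c r) sg \<and> VI (cube c r) * SI (cube c r) powr (p-1) \<le> CA * r powr ((real CARD('n) + 1) * p)"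
    and iX: "set_integrable lborel (cube c r) (\<lambda>z. \<bar>f z\<bar> powr p * V z)"
  shows "set_integrable lborel (\<Delta> k) (\<lambda>z. \<bar>S_op a b \<Delta> k f z\<bar> powr p * V z) \<and>
    (LINT z:\<Delta> k|lborel. \<bar>S_op a b \<Delta> k f z\<bar> powr p * V z) \<le>
       ((max 1 ((\<beta>/(2*\<beta>+2)) powr b) * (2*\<beta>) powr (-(real CARD('n) + 1))) powr p * CA) * (LINT z:\<Delta> k|lborel. \<bar>f z\<bar> powr p * V z)"
proof -
  define N where "N = real CARD('n) + 1"
  define D where "D = cube c r"
  define KK where "KK = max 1 ((\<beta>/(2*\<beta>+2)) powr b) * (2*\<beta>) powr (-N)"
  define g where "g = (\<lambda>z w. snd w powr b * f w / norm (z - reflect w) powr (real CARD('n) + 1 + a + b))"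
  define S where "S = (\<lambda>z. snd z powr a * (LINT w:D|lborel. g z w))"
  have Seq: "S_op a b \<Delta> k f = S" by (simp add: fun_eq_iff S_op_def S_def g_def Dk D_def)
  have KK: "KK > 0" using \<beta> by (simp add: KK_def)
  have rc: "r < snd c" using lo r \<beta> by (smt (verit) mult_pos_pos)
  have DH: "D \<subseteq> Hup" unfolding D_def using rc by (intro cube_Hup)
  have Dc: "compact D" by (simp add: D_def compact_cube)
  have Ds: "D \<in> sets lborel" unfolding D_def by (rule cube_sets)
  define X where "X = (LINT z:D|lborel. \<bar>f z\<bar> powr p * V z)"
  have X0: "X \<ge> 0" unfolding X_def using V_nn[OF DH] by (intro sint_nonneg mult_nonneg_nonneg) auto
  have iXD: "set_integrable lborel D (\<lambda>z. \<bar>f z\<bar> powr p * V z)" using iX by (simp add: D_def)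
  have iVD: "set_integrable lborel D V" using Vint[OF Dc DH] .
  have gpos: "norm (z - reflect w) > 0" "snd w > 0" if "z \<in> D" "w \<in> D" for z w
  proof -
    have "snd z > 0" "snd w > 0" using that DH by (auto simp: Hup_def)
    moreover have "snd (z - reflect w) = snd z + snd w" by (simp add: reflect_def)
    moreover have "norm (snd (z - reflect w)) \<le> norm (z - reflect w)"
      using norm_snd_le[where x="fst (z - reflect w)" and y="snd (z - reflect w)"] by (simp only: prod.collapse)
    ultimately show "norm (z - reflect w) > 0" "snd w > 0" by auto
  qed
  have main: "set_integrable lborel D (\<lambda>z. \<bar>S z\<bar> powr p * V z) \<and> (LINT z:D|lborel. \<bar>S z\<bar> powr p * V z) \<le> (KK powr p * CA) * X"
  proof (cases "set_borel_measurable lborel D f")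
    case False
    have S0: "S z = 0" if z: "z \<in> D" for z
    proof -
      have "\<not> set_integrable lborel D (g z)"
      proof
        assume "set_integrable lborel D (g z)"
        hence m1: "(\<lambda>w. indicator D w *\<^sub>R g z w) \<in> borel_measurable lborel"
          unfolding set_integrable_def by (rule borel_measurable_integrable)
        have m2: "(\<lambda>w. norm (z - reflect w) powr (real CARD('n) + 1 + a + b) / snd w powr b) \<in> borel_measurable lborel"
        proof -
          have c1: "(\<lambda>w::'n pt. norm (z - reflect w)) \<in> borel_measurable borel"
            unfolding reflect_def by (intro borel_measurable_continuous_onI continuous_intros)
          have c2: "(\<lambda>w::'n pt. snd w) \<in> borel_measurable borel"
            by (intro borel_measurable_continuous_onI continuous_intros)
          have "(\<lambda>w. norm (z - reflect w) powr (real CARD('n) + 1 + a + b) / snd w powr b) \<in> borel_measurable borel"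
            using c1 c2 by (intro borel_measurable_divide powr_real_measurable) auto
          thus ?thesis by simp
        qed
        have "(\<lambda>w. (indicator D w *\<^sub>R g z w) * (norm (z - reflect w) powr (real CARD('n) + 1 + a + b) / snd w powr b)) = (\<lambda>w. indicator D w *\<^sub>R f w)"
        proof
          fix w show "(indicator D w *\<^sub>R g z w) * (norm (z - reflect w) powr (real CARD('n) + 1 + a + b) / snd w powr b) = indicator D w *\<^sub>R f w"
          proof (cases "w \<in> D")
            case True
            then show ?thesis using gpos[OF z True] by (simp add: g_def)
          qed simp
        qed
        moreover have "(\<lambda>w. (indicator D w *\<^sub>R g z w) * (norm (z - reflect w) powr (real CARD('n) + 1 + a + b) / snd w powr b)) \<in> borel_measurable lborel"
          using m1 m2 by (rule borel_measurable_times)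
        ultimately show False using False by (simp add: set_borel_measurable_def)
      qed
      hence "(LINT w:D|lborel. g z w) = 0" unfolding set_integrable_def set_lebesgue_integral_def
        by (rule not_integrable_integral_eq)
      thus ?thesis by (simp add: S_def)
    qed
    have e: "set_integrable lborel D (\<lambda>z. \<bar>S z\<bar> powr p * V z) = set_integrable lborel D (\<lambda>z. 0::real)"
      using S0 by (intro set_integrable_cong) auto
    have e2: "(LINT z:D|lborel. \<bar>S z\<bar> powr p * V z) = (LINT z:D|lborel. (0::real))"
      using S0 by (intro set_lebesgue_integral_cong Ds) auto
    have "0 \<le> (KK powr p * CA) * X" using CAp X0 by simp
    thus ?thesis using e e2 by (simp add: set_integrable_def)
  next
    case True
    have gm: "set_borel_measurable lborel D (\<lambda>x. \<bar>f x\<bar>)"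
    proof -
      have "(\<lambda>x. \<bar>indicator D x *\<^sub>R f x\<bar>) \<in> borel_measurable lborel"
        using True unfolding set_borel_measurable_def by (rule borel_measurable_abs)
      moreover have "(\<lambda>x. \<bar>indicator D x *\<^sub>R f x\<bar>) = (\<lambda>x. indicator D x *\<^sub>R \<bar>f x\<bar>)"
        by (auto simp: fun_eq_iff indicator_def)
      ultimately show ?thesis by (simp add: set_borel_measurable_def)
    qed
    have iY: "set_integrable lborel D sg" using CAb by (simp add: D_def)
    define I where "I = (LINT x:D|lborel. \<bar>f x\<bar>)"
    have H: "set_integrable lborel D (\<lambda>x. \<bar>f x\<bar>) \<and> I powr p \<le> X * SI D powr (p-1)"
      unfolding I_def X_def
      by (rule holder_w[OF p1 Ds _ _ gm iXD iY]) (use DH Vpos in auto)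
    have iF: "set_integrable lborel D (\<lambda>x. \<bar>f x\<bar>)" using H by blast
    have I0: "I \<ge> 0" unfolding I_def by (rule sint_nonneg) simp
    have ptw: "\<bar>S z\<bar> \<le> KK * r powr (-N) * I" if z: "z \<in> D" for z
    proof -
      define t where "t = snd z"
      have t: "t > 0" using z DH by (auto simp: Hup_def t_def)
      have kb: "\<bar>g z w\<bar> \<le> (KK * r powr (-N) / t powr a) * \<bar>f w\<bar>" if w: "w \<in> D" for w
      proof -
        have kbd: "t powr a * (snd w powr b / norm (z - reflect w) powr (N + a + b)) \<le> KK * r powr (-N)"
          using kernel_bound[OF r \<beta> lo a b z[unfolded D_def] w[unfolded D_def]]
          unfolding KK_def N_def t_def .
        have k0: "snd w powr b / norm (z - reflect w) powr (N + a + b) \<ge> 0" by simp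
        have "\<bar>g z w\<bar> = (snd w powr b / norm (z - reflect w) powr (N + a + b)) * \<bar>f w\<bar>"
          by (simp add: g_def N_def abs_mult abs_divide)
        also have "\<dots> \<le> (KK * r powr (-N) / t powr a) * \<bar>f w\<bar>"
          using kbd t by (intro mult_right_mono) (auto simp: field_simps)
        finally show ?thesis .
      qed
      have gmz: "set_borel_measurable lborel D (g z)"
      proof -
        have "(\<lambda>w. (snd w powr b / norm (z - reflect w) powr (real CARD('n) + 1 + a + b)) * (indicator D w *\<^sub>R f w)) \<in> borel_measurable lborel"
          using kz_meas True unfolding set_borel_measurable_def by (rule borel_measurable_times)
        moreover have "(\<lambda>w. (snd w powr b / norm (z - reflect w) powr (real CARD('n) + 1 + a + b)) * (indicator D w *\<^sub>R f w)) = (\<lambda>w. indicator D w *\<^sub>R g z w)"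
          by (auto simp: fun_eq_iff g_def indicator_def)
        ultimately show ?thesis by (simp add: set_borel_measurable_def)
      qed
      have ib: "set_integrable lborel D (\<lambda>w. (KK * r powr (-N) / t powr a) * \<bar>f w\<bar>)"
        using iF by (rule set_integrable_mult_right)
      have ig: "set_integrable lborel D (g z)"
      proof (rule set_integrable_bound[OF ib gmz])
        show "AE w in lborel. w \<in> D \<longrightarrow> norm (g z w) \<le> norm ((KK * r powr (-N) / t powr a) * \<bar>f w\<bar>)"
        proof (intro AE_I2 impI)
          fix w assume w: "w \<in> D"
          have "\<bar>g z w\<bar> \<le> (KK * r powr (-N) / t powr a) * \<bar>f w\<bar>" by (rule kb[OF w])
          also have "\<dots> \<le> \<bar>(KK * r powr (-N) / t powr a) * \<bar>f w\<bar>\<bar>" by (rule abs_ge_self)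
          finally show "norm (g z w) \<le> norm ((KK * r powr (-N) / t powr a) * \<bar>f w\<bar>)" by (simp only: real_norm_def)
        qed
      qed
      have "\<bar>LINT w:D|lborel. g z w\<bar> \<le> (LINT w:D|lborel. \<bar>g z w\<bar>)"
        using set_integral_norm_bound[OF ig] by simp
      also have "\<dots> \<le> (LINT w:D|lborel. (KK * r powr (-N) / t powr a) * \<bar>f w\<bar>)"
        using set_integrable_abs[OF ig] ib kb by (rule set_integral_mono)
      also have "\<dots> = (KK * r powr (-N) / t powr a) * I" by (simp add: I_def)
      finally have "t powr a * \<bar>LINT w:D|lborel. g z w\<bar> \<le> t powr a * ((KK * r powr (-N) / t powr a) * I)"
        by (intro mult_left_mono) auto
      also have "\<dots> = KK * r powr (-N) * I" using t by simp
      finally show ?thesis by (simp add: S_def t_def abs_mult)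
    qed
    have Sm: "S \<in> borel_measurable lborel" unfolding S_def g_def
      using Sf_meas True unfolding set_borel_measurable_def by blast
    have iVm: "(\<lambda>z. indicator D z *\<^sub>R V z) \<in> borel_measurable lborel"
      using iVD unfolding set_integrable_def by (rule borel_measurable_integrable)
    have SVm: "set_borel_measurable lborel D (\<lambda>z. \<bar>S z\<bar> powr p * V z)"
    proof -
      have "(\<lambda>z. \<bar>S z\<bar> powr p * (indicator D z *\<^sub>R V z)) \<in> borel_measurable lborel"
        using Sm iVm by measurable
      moreover have "(\<lambda>z. \<bar>S z\<bar> powr p * (indicator D z *\<^sub>R V z)) = (\<lambda>z. indicator D z *\<^sub>R (\<bar>S z\<bar> powr p * V z))"
        by (auto simp: fun_eq_iff indicator_def)
      ultimately show ?thesis by (simp add: set_borel_measurable_def)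
    qed
    define L where "L = KK * r powr (-N) * I"
    have L0: "L \<ge> 0" using KK I0 by (simp add: L_def)
    have iLV: "set_integrable lborel D (\<lambda>z. L powr p * V z)" using iVD by (rule set_integrable_mult_right)
    have bd: "\<bar>S z\<bar> powr p * V z \<le> L powr p * V z" if z: "z \<in> D" for z
      using ptw[OF z] V_nn[OF DH z] p1 unfolding L_def by (intro mult_right_mono powr_mono2) auto
    have iS: "set_integrable lborel D (\<lambda>z. \<bar>S z\<bar> powr p * V z)"
      using iLV SVm by (rule set_integrable_bound) (use bd V_nn[OF DH] in \<open>auto intro!: AE_I2\<close>)
    have "(LINT z:D|lborel. \<bar>S z\<bar> powr p * V z) \<le> (LINT z:D|lborel. L powr p * V z)"
      using iS iLV bd by (rule set_integral_mono)
    also have "\<dots> = L powr p * VI D" by simp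
    also have "L powr p = KK powr p * r powr (-N*p) * I powr p"
      using KK I0 r by (simp add: L_def powr_mult powr_powr)
    also have "KK powr p * r powr (-N*p) * I powr p * VI D \<le> KK powr p * r powr (-N*p) * (X * SI D powr (p-1)) * VI D"
      using H KK r VI_nonneg[OF DH] by (intro mult_right_mono mult_left_mono) auto
    also have "\<dots> = KK powr p * r powr (-N*p) * X * (VI D * SI D powr (p-1))" by simp
    also have "\<dots> \<le> KK powr p * r powr (-N*p) * X * (CA * r powr (N * p))"
      using CAb X0 KK r by (intro mult_left_mono) (auto simp: D_def N_def)
    also have "\<dots> = (KK powr p * CA) * X * (r powr (-N*p) * r powr (N*p))" by simp
    also have "r powr (-N*p) * r powr (N*p) = 1" using r by (simp add: powr_add[symmetric])
    finally show ?thesis using iS by simp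
  qed
  show ?thesis using main unfolding Seq Dk X_def D_def KK_def N_def .
qed

end

theorem mainTheorem1:
  fixes \<Delta> :: "nat \<Rightarrow> 'n::finite pt set"
    and V :: "'n pt \<Rightarrow> real"
    and a b \<sigma> p :: real
  assumes "whitney_family \<Delta>"
    and "a > 0" and "b > -1" and "0 < \<sigma>" and "1 < p"
    and "MH p V"
  shows "\<exists>C>0. \<forall>f :: 'n pt \<Rightarrow> real.
           Lp_loc p f
           \<and> (\<forall>k. set_integrable lborel (\<Delta> k) (\<lambda>z. \<bar>f z\<bar> powr p * V z))
           \<and> summable (\<lambda>k. (LINT z:\<Delta> k|lborel. \<bar>f z\<bar> powr p * V z) powr (\<sigma> / p))
           \<longrightarrow>
             (\<forall>k. set_integrable lborel (\<Delta> k) (\<lambda>z. \<bar>S_op a b \<Delta> k f z\<bar> powr p * V z))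
           \<and> summable (\<lambda>k. (LINT z:\<Delta> k|lborel. \<bar>S_op a b \<Delta> k f z\<bar> powr p * V z) powr (\<sigma> / p))
           \<and> (\<Sum>k. (LINT z:\<Delta> k|lborel. \<bar>S_op a b \<Delta> k f z\<bar> powr p * V z) powr (\<sigma> / p))
               \<le> C * (\<Sum>k. (LINT z:\<Delta> k|lborel. \<bar>f z\<bar> powr p * V z) powr (\<sigma> / p))"
proof -
  note W = assms(1) and a = assms(2) and b = assms(3) and \<sigma> = assms(4) and p = assms(5)
  have MHu: "(\<forall>z\<in>Hup. V z > 0)
     \<and> (\<forall>K. compact K \<and> K \<subseteq> Hup \<longrightarrow> set_integrable lborel K V)
     \<and> (\<forall>w\<in>Hup. set_integrable lborel (Qcube w) (\<lambda>z. V z powr (- (p / (p - 1)) / p)))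
     \<and> (\<exists>M. \<forall>w\<in>Hup.
          ((LINT z:Qcube w|lborel. V z) / measure lborel (Qcube w)) *
          ((LINT z:Qcube w|lborel. V z powr (- (p / (p - 1)) / p)) / measure lborel (Qcube w)) powr (p / (p / (p - 1)))
          \<le> M)"
    using assms(6) unfolding MH_def Let_def .
  have pq: "p / (p / (p - 1)) = p - 1" using p by (simp add: field_simps)
  obtain M where Mb: "\<forall>w\<in>Hup.
          ((LINT z:Qcube w|lborel. V z) / measure lborel (Qcube w)) *
          ((LINT z:Qcube w|lborel. V z powr (- (p / (p - 1)) / p)) / measure lborel (Qcube w)) powr (p - 1)
          \<le> M" using MHu unfolding pq by blast
  interpret mhw p V M
  proof
    show "1 < p" by (rule p)
    show "\<And>z. z \<in> Hup \<Longrightarrow> 0 < V z" using MHu by blast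
    show "\<And>K. compact K \<Longrightarrow> K \<subseteq> Hup \<Longrightarrow> set_integrable lborel K V" using MHu by blast
    show "\<And>w. w \<in> Hup \<Longrightarrow> set_integrable lborel (Qcube w) (\<lambda>z. V z powr (- (p / (p - 1)) / p))" using MHu by blast
    show "\<And>w. w \<in> Hup \<Longrightarrow> ((LINT z:Qcube w|lborel. V z) / measure lborel (Qcube w)) *
          ((LINT z:Qcube w|lborel. V z powr (- (p / (p - 1)) / p)) / measure lborel (Qcube w)) powr (p - 1) \<le> M"
      using Mb by blast
  qed
  obtain c r \<beta> B where r: "\<And>k. r k > 0" and Dk: "\<And>k. \<Delta> k = cube (c k) (r k)" and \<beta>: "\<beta> > 0" and B: "B > 0"
    and lo: "\<And>k. \<beta> * r k \<le> snd (c k) - r k" and hi: "\<And>k. snd (c k) - r k \<le> B * r k"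
    using whitney_geom[OF W] by metis
  obtain CA where CA: "CA > 0" and CAb: "\<forall>(c::'n pt) r. r > 0 \<and> \<beta> * r \<le> snd c - r \<and> snd c - r \<le> B * r \<longrightarrow>
     set_integrable lborel (cube c r) sg \<and>
     VI (cube c r) * SI (cube c r) powr (p-1) \<le> CA * r powr ((real CARD('n) + 1) * p)"
    using Ap_cube[OF \<beta> B] by blast
  define C1 where "C1 = (max 1 ((\<beta>/(2*\<beta>+2)) powr b) * (2*\<beta>) powr (-(real CARD('n) + 1))) powr p * CA"
  have C1: "C1 > 0" using CA \<beta> by (simp add: C1_def)
  define C where "C = C1 powr (\<sigma>/p)"
  have C: "C > 0" using C1 by (simp add: C_def)
  show ?thesis
  proof (intro exI[of _ C] conjI[OF C] allI impI)
    fix f :: "'n pt \<Rightarrow> real"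
    assume hf: "Lp_loc p f \<and> (\<forall>k. set_integrable lborel (\<Delta> k) (\<lambda>z. \<bar>f z\<bar> powr p * V z))
           \<and> summable (\<lambda>k. (LINT z:\<Delta> k|lborel. \<bar>f z\<bar> powr p * V z) powr (\<sigma> / p))"
    define X where "X = (\<lambda>k. LINT z:\<Delta> k|lborel. \<bar>f z\<bar> powr p * V z)"
    define Y where "Y = (\<lambda>k. LINT z:\<Delta> k|lborel. \<bar>S_op a b \<Delta> k f z\<bar> powr p * V z)"
    have DH: "\<Delta> k \<subseteq> Hup" for k
    proof -
      have "r k < snd (c k)" using lo[of k] r[of k] \<beta> by (smt (verit) mult_pos_pos)
      thus ?thesis unfolding Dk by (rule cube_Hup)
    qed
    have pk: "set_integrable lborel (\<Delta> k) (\<lambda>z. \<bar>S_op a b \<Delta> k f z\<bar> powr p * V z) \<and> Y k \<le> C1 * X k" for k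
    proof -
      have "set_integrable lborel (\<Delta> k) (\<lambda>z. \<bar>f z\<bar> powr p * V z)" using hf by blast
      hence iX: "set_integrable lborel (cube (c k) (r k)) (\<lambda>z. \<bar>f z\<bar> powr p * V z)"
        unfolding Dk .
      have cb: "set_integrable lborel (cube (c k) (r k)) sg \<and> VI (cube (c k) (r k)) * SI (cube (c k) (r k)) powr (p-1) \<le> CA * r k powr ((real CARD('n) + 1) * p)"
        using CAb r[of k] lo[of k] hi[of k] by blast
      show ?thesis using per_cube[where \<Delta>=\<Delta> and k=k and c="c k" and r="r k", OF Dk[of k] r[of k] \<beta> lo[of k] a b CA cb iX]
        unfolding Y_def X_def C1_def by simp
    qed
    have X0: "X k \<ge> 0" for k unfolding X_def using V_nn[OF DH] by (intro sint_nonneg mult_nonneg_nonneg) auto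
    have Y0: "Y k \<ge> 0" for k unfolding Y_def using V_nn[OF DH] by (intro sint_nonneg mult_nonneg_nonneg) auto
    have cmp: "Y k powr (\<sigma>/p) \<le> C * X k powr (\<sigma>/p)" for k
    proof -
      have "Y k powr (\<sigma>/p) \<le> (C1 * X k) powr (\<sigma>/p)" using pk[of k] Y0[of k] \<sigma> p by (intro powr_mono2) auto
      also have "\<dots> = C * X k powr (\<sigma>/p)" using C1 X0[of k] by (simp add: C_def powr_mult)
      finally show ?thesis .
    qed
    have sX: "summable (\<lambda>k. X k powr (\<sigma>/p))" using hf by (simp add: X_def)
    have sCX: "summable (\<lambda>k. C * X k powr (\<sigma>/p))" using sX by (rule summable_mult)
    have sY: "summable (\<lambda>k. Y k powr (\<sigma>/p))"
      by (rule summable_comparison_test'[OF sCX]) (use cmp in simp)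
    have "(\<Sum>k. Y k powr (\<sigma>/p)) \<le> (\<Sum>k. C * X k powr (\<sigma>/p))" using cmp sY sCX by (rule suminf_le)
    also have "\<dots> = C * (\<Sum>k. X k powr (\<sigma>/p))" using sX by (simp add: suminf_mult)
    finally have le: "(\<Sum>k. Y k powr (\<sigma>/p)) \<le> C * (\<Sum>k. X k powr (\<sigma>/p))" .
    show "(\<forall>k. set_integrable lborel (\<Delta> k) (\<lambda>z. \<bar>S_op a b \<Delta> k f z\<bar> powr p * V z))
           \<and> summable (\<lambda>k. (LINT z:\<Delta> k|lborel. \<bar>S_op a b \<Delta> k f z\<bar> powr p * V z) powr (\<sigma> / p))
           \<and> (\<Sum>k. (LINT z:\<Delta> k|lborel. \<bar>S_op a b \<Delta> k f z\<bar> powr p * V z) powr (\<sigma> / p))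
               \<le> C * (\<Sum>k. (LINT z:\<Delta> k|lborel. \<bar>f z\<bar> powr p * V z) powr (\<sigma> / p))"
      using pk sY le unfolding X_def Y_def by blast
  qed
qed

end
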